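(* Let $\mathbb{F}\subseteq\mathbb{C}$ be a subfield closed under complex conjugation, let $m\ge 1$, $N\ge1$, and let $\mathbf{A}(z)=\sum_{k=0}^N A_kz^k$ with $A_k\in\mathbb{F}^{m\times m}$ and $A_N\neq 0$ satisfy $\mathbf{A}(z)\widetilde{\mathbf{A}}(z)=I_m$ for all $z\in\mathbb{C}\setminus\{0\}$, where $\widetilde{\mathbf{A}}(z)=\sum_{k=0}^N A_k^*z^{-k}$. Then $\det\mathbf{A}(z)=c\,z^d$ for some constant $c\ne0$ and integer $d\ge0$, and: (a) $d\ge N$; (b) $d=N$ if and only if $\operatorname{rank}(A_0)=m-1$.
   Context: $A^*$ denotes the conjugate transpose of a matrix $A$. *)

theory Defs
  imports "HOL-Analysis.Analysis"
begin

definition cmat_adj :: "complex^'n^'m \<Rightarrow> complex^'m^'n" where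
  "cmat_adj A = (\<chi> i j. cnj (A $ j $ i))"

definition is_subfield :: "complex set \<Rightarrow> bool" where
  "is_subfield F \<longleftrightarrow> 0 \<in> F \<and> 1 \<in> F \<and>
     (\<forall>x\<in>F. \<forall>y\<in>F. x + y \<in> F \<and> x * y \<in> F) \<and>
     (\<forall>x\<in>F. - x \<in> F \<and> inverse x \<in> F)"

definition mpoly_eval :: "(nat \<Rightarrow> complex^'m^'m) \<Rightarrow> nat \<Rightarrow> complex \<Rightarrow> complex^'m^'m" where
  "mpoly_eval A N z = (\<chi> i j. \<Sum>k\<le>N. A k $ i $ j * z ^ k)"

definition mpoly_tilde :: "(nat \<Rightarrow> complex^'m^'m) \<Rightarrow> nat \<Rightarrow> complex \<Rightarrow> complex^'m^'m" where
  "mpoly_tilde A N z = (\<chi> i j. \<Sum>k\<le>N. cmat_adj (A k) $ i $ j * inverse z ^ k)"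

end

theory Submission imports Defs "HOL-Computational_Algebra.Fundamental_Theorem_Algebra" begin

definition ispoly :: "(complex \<Rightarrow> complex) \<Rightarrow> bool" where
  "ispoly f \<longleftrightarrow> (\<exists>p. \<forall>z. f z = poly p z)"

lemma ispoly_const: "ispoly (\<lambda>z. c)"
  unfolding ispoly_def by (rule exI[of _ "[:c:]"]) simp

lemma ispoly_pow: "ispoly (\<lambda>z. z ^ k)"
  unfolding ispoly_def by (rule exI[of _ "monom 1 k"]) (simp add: poly_monom)

lemma ispoly_add: "ispoly f \<Longrightarrow> ispoly g \<Longrightarrow> ispoly (\<lambda>z. f z + g z)"
  unfolding ispoly_def by (metis poly_add)

lemma ispoly_mult: "ispoly f \<Longrightarrow> ispoly g \<Longrightarrow> ispoly (\<lambda>z. f z * g z)"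
  unfolding ispoly_def by (metis poly_mult)

lemma ispoly_sum: "finite S \<Longrightarrow> (\<And>x. x \<in> S \<Longrightarrow> ispoly (f x)) \<Longrightarrow> ispoly (\<lambda>z. \<Sum>x\<in>S. f x z)"
proof (induction S rule: finite_induct)
  case empty then show ?case using ispoly_const[of 0] by simp
next
  case (insert a S) then show ?case by (simp add: ispoly_add)
qed

lemma ispoly_prod: "finite S \<Longrightarrow> (\<And>x. x \<in> S \<Longrightarrow> ispoly (f x)) \<Longrightarrow> ispoly (\<lambda>z. \<Prod>x\<in>S. f x z)"
proof (induction S rule: finite_induct)
  case empty then show ?case using ispoly_const[of 1] by simp
next
  case (insert a S) then show ?case by (simp add: ispoly_mult)
qed

lemma ispoly_det:
  fixes M :: "complex \<Rightarrow> complex^'n^'n"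
  assumes "\<And>i j. ispoly (\<lambda>z. M z $ i $ j)"
  shows "ispoly (\<lambda>z. det (M z))"
  unfolding det_def
  by (intro ispoly_sum ispoly_mult ispoly_prod ispoly_const assms) auto

lemma isCont_det:
  fixes M :: "complex \<Rightarrow> complex^'n^'n"
  assumes "\<And>i j. isCont (\<lambda>z. M z $ i $ j) x"
  shows "isCont (\<lambda>z. det (M z)) x"
  unfolding det_def
  by (intro continuous_intros assms)

lemma poly_monomial_form:
  fixes p :: "complex poly"
  assumes "\<And>z. z \<noteq> 0 \<Longrightarrow> poly p z \<noteq> 0"
  shows "\<exists>c d. c \<noteq> 0 \<and> (\<forall>z. poly p z = c * z ^ d)"
proof -
  have p0: "p \<noteq> 0" using assms[of 1] by auto
  obtain q where q: "p = [:- 0, 1:] ^ order 0 p * q" "\<not> [:- 0, 1:] dvd q"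
    using order_decomp[OF p0] by blast
  have q0: "poly q 0 \<noteq> 0" using q(2) by (simp add: poly_eq_0_iff_dvd)
  have qz: "poly q z \<noteq> 0" for z
  proof (cases "z = 0")
    case True then show ?thesis using q0 by simp
  next
    case False
    then have "poly p z \<noteq> 0" using assms by blast
    then show ?thesis by (subst (asm) q(1)) auto
  qed
  have "constant (poly q)"
    using fundamental_theorem_of_algebra qz by blast
  then have "poly q z = poly q 0" for z unfolding constant_def by blast
  then show ?thesis using q0
    by (intro exI[of _ "poly q 0"] exI[of _ "order 0 p"]) (subst q(1), simp)
qed


definition adjR :: "'a::field^'n^'n \<Rightarrow> 'a^'n^'n" where
  "adjR A = (\<chi> a b. det (\<chi> r. if r = b then axis a 1 else row r A))"

lemma adjR_mult: "(A ** adjR A) $ k $ b = (if k = b then det A else 0)"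
proof -
  have "(A ** adjR A) $ k $ b = (\<Sum>a\<in>UNIV. A$k$a * det (\<chi> r. if r = b then axis a 1 else row r A))"
    by (simp add: matrix_matrix_mult_def adjR_def)
  also have "\<dots> = (\<Sum>a\<in>UNIV. det (\<chi> r. if r = b then A$k$a *s axis a 1 else row r A))"
    by (simp add: det_row_mul)
  also have "\<dots> = det (\<chi> r. if r = b then (\<Sum>a\<in>UNIV. A$k$a *s axis a 1) else row r A)"
    by (simp add: det_linear_row_sum)
  also have "(\<Sum>a\<in>UNIV. A$k$a *s axis a 1) = row k A"
    by (simp add: vec_eq_iff row_def axis_def if_distrib cong: if_cong)
  finally have e: "(A ** adjR A) $ k $ b = det (\<chi> r. if r = b then row k A else row r A)" .
  show ?thesis
  proof (cases "k = b")
    case True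
    then have "(\<chi> r. if r = b then row k A else row r A) = A"
      by (simp add: vec_eq_iff row_def)
    with e True show ?thesis by simp
  next
    case False
    have "det (\<chi> r. if r = b then row k A else row r A) = 0"
      by (rule det_identical_rows[OF False]) (simp add: row_def vec_eq_iff False)
    with e False show ?thesis by simp
  qed
qed


lemma det_span_rows:
  fixes M :: "'a::field^'n^'n"
  assumes "vec.span (rows M) = UNIV"
  shows "det M \<noteq> 0"
proof -
  obtain B :: "'a^'n^'n" where "B ** M = mat 1"
    using matrix_left_invertible_span_rows_gen[of M] assms by blast
  then have "det B * det M = 1" by (metis det_I det_mul)
  then show ?thesis by auto
qed

lemma rank_lt_if_det0:
  fixes A :: "'a::field^'n^'n"
  assumes "det A = 0"
  shows "rank A < CARD('n)"
proof (rule ccontr)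
  assume "\<not> rank A < CARD('n)"
  then have ge: "CARD('n) \<le> vec.dim (rows A)" by (simp add: row_rank_def_gen)
  obtain B where B: "B \<subseteq> rows A" "vec.independent B" "rows A \<subseteq> vec.span B" "card B = vec.dim (rows A)"
    using vec.basis_exists by blast
  have "UNIV \<subseteq> vec.span B"
    by (rule vec.card_ge_dim_independent) (use B ge in \<open>auto simp: card_cart_basis\<close>)
  then have "vec.span (rows A) = UNIV"
    using vec.span_mono[OF B(1)] by auto
  with det_span_rows assms show False by blast
qed

lemma det_replace_row_zero:
  fixes A :: "'a::field^'n^'n"
  assumes "\<And>a. det (\<chi> r. if r = b then axis a 1 else row r A) = 0"
  shows "det (\<chi> r. if r = b then v else row r A) = 0"
proof -
  have "v = (\<Sum>a\<in>UNIV. v$a *s axis a 1)"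
    by (simp add: vec_eq_iff axis_def if_distrib cong: if_cong)
  then have "det (\<chi> r. if r = b then v else row r A) = det (\<chi> r. if r = b then (\<Sum>a\<in>UNIV. v$a *s axis a 1) else row r A)"
    by (rule arg_cong[where f="\<lambda>w. det (\<chi> r. if r = b then w else row r A)"])
  also have "\<dots> = (\<Sum>a\<in>UNIV. det (\<chi> r. if r = b then v$a *s axis a 1 else row r A))"
    by (simp add: det_linear_row_sum)
  also have "\<dots> = (\<Sum>a\<in>UNIV. v$a * det (\<chi> r. if r = b then axis a 1 else row r A))"
    by (simp add: det_row_mul)
  also have "\<dots> = 0" using assms by simp
  finally show ?thesis .
qed

lemma rank_ge_if_adjR:
  fixes A :: "'a::field^'n^'n"
  assumes "adjR A \<noteq> 0"
  shows "CARD('n) - 1 \<le> rank A"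
proof -
  obtain a b where ab: "det (\<chi> r. if r = b then axis a 1 else row r A) \<noteq> 0"
    using assms by (auto simp: adjR_def vec_eq_iff)
  define M :: "'a^'n^'n" where "M = (\<chi> r. if r = b then axis a 1 else row r A)"
  have dM: "det M \<noteq> 0" using ab M_def by simp
  have rowM: "r \<noteq> b \<Longrightarrow> row r M = row r A" for r by (simp add: M_def row_def vec_eq_iff)
  define S where "S = (\<lambda>r. row r A) ` (UNIV - {b})"
  have inj: "inj_on (\<lambda>r. row r A) (UNIV - {b})"
  proof (rule inj_onI)
    fix r s assume "r \<in> UNIV - {b}" "s \<in> UNIV - {b}" "row r A = row s A"
    then show "r = s" using det_identical_rows[of r s M] dM rowM by auto
  qed
  have cS: "card S = CARD('n) - 1"
    unfolding S_def by (simp add: card_image[OF inj] card_Diff_singleton)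
  have SM: "S \<subseteq> rows M" unfolding S_def rows_def proof
    fix x assume "x \<in> (\<lambda>r. row r A) ` (UNIV - {b})"
    then obtain r where "r \<noteq> b" "x = row r A" by blast
    then have "x = row r M" using rowM by simp
    then show "x \<in> {row i M |i. i \<in> UNIV}" by blast
  qed
  have "vec.independent (rows M)" using det_dependent_rows dM by blast
  then have iS: "vec.independent S" using vec.independent_mono SM by blast
  have "S \<subseteq> rows A" unfolding S_def rows_def by auto
  then have "card S \<le> vec.dim (rows A)" using vec.independent_card_le_dim iS by blast
  then show ?thesis using cS by (simp add: row_rank_def_gen)
qed

lemma adjR_nz_if_rank:
  fixes A :: "'a::field^'n^'n"
  assumes "CARD('n) - 1 \<le> rank A"
  shows "adjR A \<noteq> 0"
proof -
  let ?n = "CARD('n)"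
  obtain B where B: "B \<subseteq> rows A" "vec.independent B" "rows A \<subseteq> vec.span B" "card B = vec.dim (rows A)"
    using vec.basis_exists by blast
  have "?n - 1 \<le> card B" using B(4) assms by (simp add: row_rank_def_gen)
  then obtain B0 where B0: "B0 \<subseteq> B" "card B0 = ?n - 1" by (meson obtain_subset_with_card_n)
  have iB0: "vec.independent B0" using vec.independent_mono B(2) B0(1) by blast
  have fB0: "finite B0" using iB0 vec.finiteI_independent by blast
  define g where "g = (\<lambda>v. SOME i. row i A = v)"
  have g: "v \<in> B0 \<Longrightarrow> row (g v) A = v" for v
    using B0(1) B(1) unfolding g_def rows_def by (auto intro: someI)
  have "inj_on g B0" by (metis g inj_onI)
  then have "card (g ` B0) = ?n - 1" using B0(2) by (simp add: card_image)
  moreover have np: "0 < ?n" by simp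
  ultimately have "g ` B0 \<noteq> UNIV" by (metis diff_less less_numeral_extra(1) nat_neq_iff)
  then obtain b where b: "b \<notin> g ` B0" by blast
  have "\<not> UNIV \<subseteq> vec.span B0"
  proof
    assume "UNIV \<subseteq> vec.span B0"
    then have "vec.dim (UNIV :: ('a^'n) set) \<le> vec.dim (vec.span B0)" by (rule vec.dim_subset)
    also have "\<dots> = ?n - 1" using vec.dim_span vec.dim_eq_card_independent[OF iB0] B0(2) by simp
    finally show False by (simp add: card_cart_basis) (use np in linarith)
  qed
  then obtain v where v: "v \<notin> vec.span B0" by blast
  define M :: "'a^'n^'n" where "M = (\<chi> r. if r = b then v else row r A)"
  have sub: "insert v B0 \<subseteq> rows M"
  proof
    fix x assume "x \<in> insert v B0"
    then show "x \<in> rows M"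
    proof
      assume "x = v" then show ?thesis unfolding rows_def M_def by (auto simp: row_def vec_eq_iff intro!: exI[of _ b])
    next
      assume x: "x \<in> B0"
      then have "g x \<noteq> b" using b by blast
      then have "row (g x) M = x" using g[OF x] by (simp add: M_def row_def vec_eq_iff)
      then show ?thesis unfolding rows_def by (metis (mono_tags, lifting) UNIV_I mem_Collect_eq)
    qed
  qed
  have ind: "vec.independent (insert v B0)" using vec.independent_insertI[OF v iB0] .
  have vn: "v \<notin> B0" using v vec.span_base by blast
  have "card (insert v B0) = ?n" using fB0 vn B0(2) by simp
  then have "UNIV \<subseteq> vec.span (insert v B0)"
    using vec.card_ge_dim_independent[of "insert v B0" UNIV] ind by (auto simp: card_cart_basis)
  then have "vec.span (rows M) = UNIV" using vec.span_mono[OF sub] by auto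
  then have "det M \<noteq> 0" by (rule det_span_rows)
  then show ?thesis
    using det_replace_row_zero[of b A v] unfolding M_def
    by (auto simp: adjR_def vec_eq_iff)
qed


lemma ext0:
  fixes f g :: "complex \<Rightarrow> complex"
  assumes "isCont f 0" "isCont g 0" "\<And>z. z \<noteq> 0 \<Longrightarrow> f z = g z"
  shows "f 0 = g 0"
proof -
  have "(f \<longlongrightarrow> f 0) (at 0)" using assms(1) by (simp add: isCont_def)
  moreover have "(f \<longlongrightarrow> g 0) (at 0)"
  proof -
    have "(g \<longlongrightarrow> g 0) (at 0)" using assms(2) by (simp add: isCont_def)
    moreover have "eventually (\<lambda>z. g z = f z) (at 0)"
      using assms(3) by (auto simp: eventually_at_filter)
    ultimately show ?thesis by (rule Lim_transform_eventually)
  qed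
  ultimately show ?thesis using tendsto_unique by (metis trivial_limit_at)
qed

theorem lemma1:
  fixes F :: "complex set" and A :: "nat \<Rightarrow> complex^'m^'m" and N :: nat
  assumes "is_subfield F"
    and "\<forall>x\<in>F. cnj x \<in> F"
    and "N \<ge> 1"
    and "\<forall>k\<le>N. \<forall>i j. A k $ i $ j \<in> F"
    and "A N \<noteq> 0"
    and "\<forall>z. z \<noteq> 0 \<longrightarrow> mpoly_eval A N z ** mpoly_tilde A N z = mat 1"
  shows "\<exists>c::complex. \<exists>d::nat. c \<noteq> 0 \<and> (\<forall>z. z \<noteq> 0 \<longrightarrow> det (mpoly_eval A N z) = c * z ^ d)
           \<and> d \<ge> N \<and> (d = N \<longleftrightarrow> rank (A 0) = CARD('m) - 1)"
proof -
  define P where "P = mpoly_eval A N"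
  define Q where "Q = mpoly_tilde A N"
  define R :: "complex \<Rightarrow> complex^'m^'m" where
    "R = (\<lambda>z. \<chi> i j. \<Sum>k\<le>N. cnj (A k $ j $ i) * z ^ (N - k))"
  have Pe: "P z $ i $ j = (\<Sum>k\<le>N. A k $ i $ j * z ^ k)" for z i j
    by (simp add: P_def mpoly_eval_def)
  have Qe: "Q z $ i $ j = (\<Sum>k\<le>N. cnj (A k $ j $ i) * inverse z ^ k)" for z i j
    by (simp add: Q_def mpoly_tilde_def cmat_adj_def)
  have Re: "R z $ i $ j = (\<Sum>k\<le>N. cnj (A k $ j $ i) * z ^ (N - k))" for z i j
    by (simp add: R_def)
  have QR: "z ^ N * Q z $ i $ j = R z $ i $ j" if "z \<noteq> 0" for z i j
    unfolding Qe Re sum_distrib_left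
  proof (rule sum.cong)
    fix k assume "k \<in> {..N}"
    then have "k \<le> N" by simp
    then have "z ^ (N - k) = z ^ N * inverse z ^ k" using that
      by (simp add: power_diff field_simps power_inverse)
    then show "z ^ N * (cnj (A k $ j $ i) * inverse z ^ k) = cnj (A k $ j $ i) * z ^ (N - k)"
      by simp
  qed simp
  have PQ: "z \<noteq> 0 \<Longrightarrow> P z ** Q z = mat 1" for z using assms(6) P_def Q_def by simp
  have QP: "z \<noteq> 0 \<Longrightarrow> Q z ** P z = mat 1" for z using PQ matrix_left_right_inverse by blast
  have detnz: "z \<noteq> 0 \<Longrightarrow> det (P z) \<noteq> 0" for z
    using PQ[of z] by (metis det_I det_mul mult_zero_left zero_neq_one)
  have ipP: "ispoly (\<lambda>z. P z $ i $ j)" for i j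
    unfolding Pe by (intro ispoly_sum ispoly_mult ispoly_const ispoly_pow) auto
  obtain p where p: "\<And>z. det (P z) = poly p z"
    using ispoly_det[of P, OF ipP] unfolding ispoly_def by blast
  obtain c d where cd: "c \<noteq> 0" "\<And>z. poly p z = c * z ^ d"
    using poly_monomial_form[of p] detnz p by metis
  have detP: "det (P z) = c * z ^ d" for z using p cd by simp
  have adjQ: "adjR (P z) $ i $ j = det (P z) * Q z $ i $ j" if "z \<noteq> 0" for z i j
  proof -
    have eq: "adjR (P z) = Q z ** (P z ** adjR (P z))"
      by (simp add: matrix_mul_assoc QP[OF that])
    have "adjR (P z) $ i $ j = (Q z ** (P z ** adjR (P z))) $ i $ j"
      using eq by (rule arg_cong[where f="\<lambda>M. M $ i $ j"])
    also have "\<dots> = (\<Sum>k\<in>UNIV. Q z $ i $ k * (P z ** adjR (P z)) $ k $ j)"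
      by (simp only: matrix_matrix_mult_def vec_lambda_beta)
    also have "\<dots> = (\<Sum>k\<in>UNIV. Q z $ i $ k * (if k = j then det (P z) else 0))"
      by (simp only: adjR_mult)
    also have "\<dots> = det (P z) * Q z $ i $ j"
      by (simp add: if_distrib cong: if_cong)
    finally show ?thesis .
  qed
  have KEY: "z ^ N * adjR (P z) $ i $ j = c * z ^ d * R z $ i $ j" if "z \<noteq> 0" for z i j
    using adjQ[OF that, of i j] QR[OF that, of i j] detP[of z]
    by (metis mult.assoc mult.left_commute)
  have cP: "isCont (\<lambda>z. P z $ i $ j) x" for i j x
    unfolding Pe by (intro continuous_intros)
  have cG: "isCont (\<lambda>z. adjR (P z) $ i $ j) x" for i j x
    unfolding adjR_def
  proof (simp, rule isCont_det)
    fix r s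
    show "isCont (\<lambda>z. (\<chi> r. if r = j then axis i 1 else row r (P z)) $ r $ s) x"
      by (cases "r = j") (simp_all add: row_def cP)
  qed
  have cR: "isCont (\<lambda>z. R z $ i $ j) x" for i j x
    unfolding Re by (intro continuous_intros)
  have R0: "R 0 $ i $ j = cnj (A N $ j $ i)" for i j
  proof -
    have "R 0 $ i $ j = (\<Sum>k\<le>N. if k = N then cnj (A k $ j $ i) else 0)"
      unfolding Re by (rule sum.cong) (auto simp: power_0_left)
    then show ?thesis by simp
  qed
  have P0: "P 0 = A 0"
  proof -
    have "P 0 $ i $ j = A 0 $ i $ j" for i j
    proof -
      have "P 0 $ i $ j = (\<Sum>k\<le>N. if k = 0 then A k $ i $ j else 0)"
        unfolding Pe by (rule sum.cong) (auto simp: power_0_left)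
      then show ?thesis by simp
    qed
    then show ?thesis by (simp add: vec_eq_iff)
  qed
  have AN: "\<exists>i j. cnj (A N $ j $ i) \<noteq> 0"
    using assms(5) by (auto simp: vec_eq_iff)
  have dN: "N \<le> d"
  proof (rule ccontr)
    assume "\<not> N \<le> d"
    then obtain e where e: "N = d + e" "e > 0" by (metis less_imp_add_positive not_le)
    have "(\<lambda>z. z ^ e * adjR (P z) $ i $ j) 0 = (\<lambda>z. c * R z $ i $ j) 0" for i j
    proof (rule ext0)
      show "isCont (\<lambda>z. z ^ e * adjR (P z) $ i $ j) 0" by (intro continuous_intros cG)
      show "isCont (\<lambda>z. c * R z $ i $ j) 0" by (intro continuous_intros cR)
      fix z :: complex assume z: "z \<noteq> 0"
      have "z ^ d * (z ^ e * adjR (P z) $ i $ j) = z ^ d * (c * R z $ i $ j)"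
        using KEY[OF z, of i j] e(1) by (simp add: power_add algebra_simps)
      then show "z ^ e * adjR (P z) $ i $ j = c * R z $ i $ j" using z by simp
    qed
    then have "c * cnj (A N $ j $ i) = 0" for i j using e(2) R0 by (simp add: zero_power)
    then show False using AN cd(1) by auto
  qed
  have iff: "d = N \<longleftrightarrow> rank (A 0) = CARD('m) - 1"
  proof
    assume dN': "d = N"
    have "adjR (P z) $ i $ j = c * R z $ i $ j" if "z \<noteq> 0" for z i j
      using KEY[OF that, of i j] dN' that by (simp add: algebra_simps)
    then have "adjR (P 0) $ i $ j = c * R 0 $ i $ j" for i j
      using ext0[of "\<lambda>z. adjR (P z) $ i $ j" "\<lambda>z. c * R z $ i $ j"] cG cR
      by (simp add: continuous_intros)
    then have "adjR (A 0) \<noteq> 0" using AN cd(1) R0 P0 by (auto simp: vec_eq_iff)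
    then have ge: "CARD('m) - 1 \<le> rank (A 0)" by (rule rank_ge_if_adjR)
    have "det (A 0) = 0" using detP[of 0] P0 dN' assms(3) by simp
    then have "rank (A 0) < CARD('m)" by (rule rank_lt_if_det0)
    with ge show "rank (A 0) = CARD('m) - 1" by linarith
  next
    assume rk: "rank (A 0) = CARD('m) - 1"
    then have nz: "adjR (A 0) \<noteq> 0" by (intro adjR_nz_if_rank) simp
    show "d = N"
    proof (rule ccontr)
      assume "d \<noteq> N"
      with dN obtain e where e: "d = N + e" "e > 0" by (metis le_imp_less_or_eq less_imp_add_positive)
      have "(\<lambda>z. adjR (P z) $ i $ j) 0 = (\<lambda>z. c * z ^ e * R z $ i $ j) 0" for i j
      proof (rule ext0)
        show "isCont (\<lambda>z. adjR (P z) $ i $ j) 0" by (rule cG)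
        show "isCont (\<lambda>z. c * z ^ e * R z $ i $ j) 0" by (intro continuous_intros cR)
        fix z :: complex assume z: "z \<noteq> 0"
        have "z ^ N * adjR (P z) $ i $ j = z ^ N * (c * z ^ e * R z $ i $ j)"
          using KEY[OF z, of i j] e(1) by (simp add: power_add algebra_simps)
        then show "adjR (P z) $ i $ j = c * z ^ e * R z $ i $ j" using z by simp
      qed
      then have "adjR (A 0) $ i $ j = 0" for i j using e(2) P0 by (simp add: zero_power)
      then show False using nz by (simp add: vec_eq_iff)
    qed
  qed
  show ?thesis
    using cd(1) detP dN iff unfolding P_def by blast
qed

end
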